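(* Let $\mathscr{V}$ be a braided monoidal category, $A$ a monoid and $B$ a bimonoid in $\mathscr{V}$, regarded as a comonoid $(B,\delta_B,\varepsilon_B)$ in the monoidal 2-category $\mathrm{Mon}\mathscr{V}$. A pair $(\gamma,\tau)$, with $\gamma\colon A\to A\otimes B$ and $\tau\colon I\to A\otimes B\otimes B$ morphisms of $\mathscr{V}$, is a twisted right coaction of $B$ on $A$ if and only if it is a normal lax right coaction of the comonoid $B$ on the object $A$ in $\mathrm{Mon}\mathscr{V}$.
   Context: Associativity and unit constraints are suppressed; $c$ is the braiding. For monoids $M,N$, $M\otimes N$ is a monoid with multiplication $(\mu_M\otimes\mu_N)\circ(1_M\otimes c_{N,M}\otimes 1_N)$ and unit $\eta_M\otimes\eta_N$. For a monoid $M$ and $u\colon X\to M$, $v\colon Y\to M$, $u\bullet v=\mu_M\circ(u\otimes v)$. A bimonoid is a monoid and comonoid whose comultiplication and counit are monoid morphisms. The 2-category $\mathrm{Mon}\mathscr{V}$: objects are monoids in $\mathscr{V}$, 1-cells are monoid morphisms, and a 2-cell $\xi\colon f\Rightarrow g$ between $f,g\colon M\to N$ is a morphism $\xi\colon I\to N$ with $\xi\bullet f=g\bullet\xi$ (as morphisms $M\to N$). Vertical composite of $\xi$ followed by $\zeta\colon g\Rightarrow h$ is $\zeta\bullet\xi$; the identity 2-cell on $f\colon M\to N$ is $\eta_N$; whiskering $\xi$ by a 1-cell $h\colon N\to L$ on the codomain side gives $h\circ\xi$, and whiskering by a 1-cell $k\colon L\to M$ on the domain side gives $\xi$. It is monoidal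 via the tensor product of monoids above, $f\otimes g$ on 1-cells and $\xi\otimes\xi'$ on 2-cells. A twisted right coaction of $B$ on $A$: a monoid morphism $\gamma\colon A\to A\otimes B$ and $\tau\colon I\to A\otimes B\otimes B$ with (counitality) $(1_A\otimes\varepsilon_B)\circ\gamma=1_A$; ($\tau$-coassociativity) $\tau\bullet((\gamma\otimes 1_B)\circ\gamma)=((1_A\otimes\delta_B)\circ\gamma)\bullet\tau$; (2-cocyclicity) $((1_A\otimes\delta_B\otimes 1_B)\circ\tau)\bullet(\tau\otimes\eta_B)=((1_{A\otimes B}\otimes\delta_B)\circ\tau)\bullet((\gamma\otimes 1_{B\otimes B})\circ\tau)$; (normality) $(1_{A\otimes B}\otimes\varepsilon_B)\circ\tau=\eta_A\otimes\eta_B=(1_A\otimes\varepsilon_B\otimes 1_B)\circ\tau$. A normal lax right coaction of a comonoid $(B,\delta,\varepsilon)$ on an object $A$ in a monoidal 2-category consists of a 1-cell $\gamma\colon A\to A\otimes B$ with $(1_A\otimes\varepsilon)\circ\gamma=1_A$ (the unit constraint 2-cell being an identity), and a 2-cell $\tau\colon(\gamma\otimes 1_B)\circ\gamma\Rightarrow(1_A\otimes\delta)\circ\gamma$, such that the two composite 2-cells $(\gamma\otimes 1_B\otimes 1_B)(\gamma\otimes 1_B)\gamma\Rightarrow(1_A\otimes\delta\otimes 1_B)(1_A\otimes\delta)\gamma=(1_A\otimes 1_B\otimes\delta)(1_A\otimes\delta)\gamma$, namely $(1_A\otimes\delta\otimes 1_B)\tau$ after $(\tau\otimes 1_B)\gamma$,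 and $(1_A\otimes 1_B\otimes\delta)\tau$ after $(\gamma\otimes 1_B\otimes 1_B)\tau$, are equal, and such that the whiskered 2-cells $(1_A\otimes\varepsilon\otimes 1_B)\tau$ and $(1_A\otimes 1_B\otimes\varepsilon)\tau$ are identity 2-cells of $\gamma$. *)

theory Defs
  imports Main
begin

section \<open>Strict braided monoidal categories (associativity and unit constraints suppressed)\<close>

text \<open>Every element of type 'm is a morphism; src/tgt give domain and codomain;
  cmp f g is "f after g" (meaningful when tgt g = src f).\<close>

record ('o,'m) bmcat =
  src :: "'m \<Rightarrow> 'o"
  tgt :: "'m \<Rightarrow> 'o"
  idm :: "'o \<Rightarrow> 'm"
  cmp :: "'m \<Rightarrow> 'm \<Rightarrow> 'm"
  tob :: "'o \<Rightarrow> 'o \<Rightarrow> 'o"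
  tmr :: "'m \<Rightarrow> 'm \<Rightarrow> 'm"
  unt :: "'o"
  brd :: "'o \<Rightarrow> 'o \<Rightarrow> 'm"

definition is_bmc :: "('o,'m) bmcat \<Rightarrow> bool" where
  "is_bmc C \<longleftrightarrow>
    (\<forall>a. src C (idm C a) = a \<and> tgt C (idm C a) = a) \<and>
    (\<forall>f g. tgt C g = src C f \<longrightarrow> src C (cmp C f g) = src C g \<and> tgt C (cmp C f g) = tgt C f) \<and>
    (\<forall>f. cmp C f (idm C (src C f)) = f \<and> cmp C (idm C (tgt C f)) f = f) \<and>
    (\<forall>f g h. tgt C h = src C g \<and> tgt C g = src C f \<longrightarrow>
        cmp C (cmp C f g) h = cmp C f (cmp C g h)) \<and>
    (\<forall>f g. src C (tmr C f g) = tob C (src C f) (src C g) \<and> tgt C (tmr C f g) = tob C (tgt C f) (tgt C g)) \<and>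
    (\<forall>a b. tmr C (idm C a) (idm C b) = idm C (tob C a b)) \<and>
    (\<forall>f f' g g'. tgt C f = src C f' \<and> tgt C g = src C g' \<longrightarrow>
        tmr C (cmp C f' f) (cmp C g' g) = cmp C (tmr C f' g') (tmr C f g)) \<and>
    (\<forall>a b c. tob C (tob C a b) c = tob C a (tob C b c)) \<and>
    (\<forall>a. tob C (unt C) a = a \<and> tob C a (unt C) = a) \<and>
    (\<forall>f g h. tmr C (tmr C f g) h = tmr C f (tmr C g h)) \<and>
    (\<forall>f. tmr C (idm C (unt C)) f = f \<and> tmr C f (idm C (unt C)) = f) \<and>
    (\<forall>a b. src C (brd C a b) = tob C a b \<and> tgt C (brd C a b) = tob C b a \<and>
        (\<exists>g. src C g = tob C b a \<and> tgt C g = tob C a b \<and>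
             cmp C g (brd C a b) = idm C (tob C a b) \<and> cmp C (brd C a b) g = idm C (tob C b a))) \<and>
    (\<forall>f g. cmp C (brd C (tgt C f) (tgt C g)) (tmr C f g) = cmp C (tmr C g f) (brd C (src C f) (src C g))) \<and>
    (\<forall>a b d. brd C a (tob C b d) = cmp C (tmr C (idm C b) (brd C a d)) (tmr C (brd C a b) (idm C d)) \<and>
             brd C (tob C a b) d = cmp C (tmr C (brd C a d) (idm C b)) (tmr C (idm C a) (brd C b d)))"

type_synonym ('o,'m) mon = "'o \<times> 'm \<times> 'm"

definition mcar :: "('o,'m) mon \<Rightarrow> 'o" where "mcar X = fst X"
definition mmul :: "('o,'m) mon \<Rightarrow> 'm" where "mmul X = fst (snd X)"
definition meta :: "('o,'m) mon \<Rightarrow> 'm" where "meta X = snd (snd X)"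

definition is_monoid :: "('o,'m) bmcat \<Rightarrow> ('o,'m) mon \<Rightarrow> bool" where
  "is_monoid C X \<longleftrightarrow> (let M = mcar X; mu = mmul X; eta = meta X in
     src C mu = tob C M M \<and> tgt C mu = M \<and> src C eta = unt C \<and> tgt C eta = M \<and>
     cmp C mu (tmr C mu (idm C M)) = cmp C mu (tmr C (idm C M) mu) \<and>
     cmp C mu (tmr C eta (idm C M)) = idm C M \<and>
     cmp C mu (tmr C (idm C M) eta) = idm C M)"

definition is_comonoid :: "('o,'m) bmcat \<Rightarrow> 'o \<Rightarrow> 'm \<Rightarrow> 'm \<Rightarrow> bool" where
  "is_comonoid C B del eps \<longleftrightarrow>
     src C del = B \<and> tgt C del = tob C B B \<and> src C eps = B \<and> tgt C eps = unt C \<and>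
     cmp C (tmr C del (idm C B)) del = cmp C (tmr C (idm C B) del) del \<and>
     cmp C (tmr C eps (idm C B)) del = idm C B \<and>
     cmp C (tmr C (idm C B) eps) del = idm C B"

definition mten :: "('o,'m) bmcat \<Rightarrow> ('o,'m) mon \<Rightarrow> ('o,'m) mon \<Rightarrow> ('o,'m) mon" where
  "mten C X Y = (tob C (mcar X) (mcar Y),
      cmp C (tmr C (mmul X) (mmul Y))
            (tmr C (tmr C (idm C (mcar X)) (brd C (mcar Y) (mcar X))) (idm C (mcar Y))),
      tmr C (meta X) (meta Y))"

definition munitmon :: "('o,'m) bmcat \<Rightarrow> ('o,'m) mon" where
  "munitmon C = (unt C, idm C (unt C), idm C (unt C))"

definition monoid_hom :: "('o,'m) bmcat \<Rightarrow> ('o,'m) mon \<Rightarrow> ('o,'m) mon \<Rightarrow> 'm \<Rightarrow> bool" where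
  "monoid_hom C X Y f \<longleftrightarrow>
     src C f = mcar X \<and> tgt C f = mcar Y \<and>
     cmp C f (mmul X) = cmp C (mmul Y) (tmr C f f) \<and>
     cmp C f (meta X) = meta Y"

definition is_bimonoid :: "('o,'m) bmcat \<Rightarrow> ('o,'m) mon \<Rightarrow> 'm \<Rightarrow> 'm \<Rightarrow> bool" where
  "is_bimonoid C B del eps \<longleftrightarrow>
     is_monoid C B \<and> is_comonoid C (mcar B) del eps \<and>
     monoid_hom C B (mten C B B) del \<and> monoid_hom C B (munitmon C) eps"

definition bullet :: "('o,'m) bmcat \<Rightarrow> ('o,'m) mon \<Rightarrow> 'm \<Rightarrow> 'm \<Rightarrow> 'm" where
  "bullet C X u v = cmp C (mmul X) (tmr C u v)"

definition twisted_right_coaction ::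
  "('o,'m) bmcat \<Rightarrow> ('o,'m) mon \<Rightarrow> ('o,'m) mon \<Rightarrow> 'm \<Rightarrow> 'm \<Rightarrow> 'm \<Rightarrow> 'm \<Rightarrow> bool" where
  "twisted_right_coaction C A B del eps \<gamma> \<tau> \<longleftrightarrow>
    (let AB = mten C A B; ABB = mten C AB B; ABBB = mten C ABB B;
         iA = idm C (mcar A); iB = idm C (mcar B) in
     monoid_hom C A AB \<gamma> \<and>
     cmp C (tmr C iA eps) \<gamma> = iA \<and>
     bullet C ABB \<tau> (cmp C (tmr C \<gamma> iB) \<gamma>) = bullet C ABB (cmp C (tmr C iA del) \<gamma>) \<tau> \<and>
     bullet C ABBB (cmp C (tmr C (tmr C iA del) iB) \<tau>) (tmr C \<tau> (meta B)) =
       bullet C ABBB (cmp C (tmr C (idm C (tob C (mcar A) (mcar B))) del) \<tau>)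
                     (cmp C (tmr C \<gamma> (idm C (tob C (mcar B) (mcar B)))) \<tau>) \<and>
     cmp C (tmr C (idm C (tob C (mcar A) (mcar B))) eps) \<tau> = tmr C (meta A) (meta B) \<and>
     cmp C (tmr C (tmr C iA eps) iB) \<tau> = tmr C (meta A) (meta B))"

definition mon1cell :: "('o,'m) bmcat \<Rightarrow> ('o,'m) mon \<Rightarrow> ('o,'m) mon \<Rightarrow> 'm \<Rightarrow> bool" where
  "mon1cell C X Y f \<longleftrightarrow> monoid_hom C X Y f"

definition mon2cell :: "('o,'m) bmcat \<Rightarrow> ('o,'m) mon \<Rightarrow> ('o,'m) mon \<Rightarrow> 'm \<Rightarrow> 'm \<Rightarrow> 'm \<Rightarrow> bool" where
  "mon2cell C X Y f g \<xi> \<longleftrightarrow>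
     mon1cell C X Y f \<and> mon1cell C X Y g \<and>
     src C \<xi> = unt C \<and> tgt C \<xi> = mcar Y \<and> bullet C Y \<xi> f = bullet C Y g \<xi>"

definition vcomp2 :: "('o,'m) bmcat \<Rightarrow> ('o,'m) mon \<Rightarrow> 'm \<Rightarrow> 'm \<Rightarrow> 'm" where
  "vcomp2 C Y \<zeta> \<xi> = bullet C Y \<zeta> \<xi>"

definition id2 :: "('o,'m) mon \<Rightarrow> 'm" where
  "id2 Y = meta Y"

definition whisk_cod :: "('o,'m) bmcat \<Rightarrow> 'm \<Rightarrow> 'm \<Rightarrow> 'm" where
  "whisk_cod C h \<xi> = cmp C h \<xi>"

definition whisk_dom :: "'m \<Rightarrow> 'm \<Rightarrow> 'm" where
  "whisk_dom \<xi> k = \<xi>"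

definition tens2 :: "('o,'m) bmcat \<Rightarrow> 'm \<Rightarrow> 'm \<Rightarrow> 'm" where
  "tens2 C \<xi> \<xi>' = tmr C \<xi> \<xi>'"

definition normal_lax_right_coaction_MonV ::
  "('o,'m) bmcat \<Rightarrow> ('o,'m) mon \<Rightarrow> ('o,'m) mon \<Rightarrow> 'm \<Rightarrow> 'm \<Rightarrow> 'm \<Rightarrow> 'm \<Rightarrow> bool" where
  "normal_lax_right_coaction_MonV C A B del eps \<gamma> \<tau> \<longleftrightarrow>
    (let AB = mten C A B; ABB = mten C AB B; ABBB = mten C ABB B;
         iA = idm C (mcar A); iB = idm C (mcar B) in
     mon1cell C A AB \<gamma> \<and>
     cmp C (tmr C iA eps) \<gamma> = iA \<and>
     mon2cell C A ABB (cmp C (tmr C \<gamma> iB) \<gamma>) (cmp C (tmr C iA del) \<gamma>) \<tau> \<and>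
     vcomp2 C ABBB (whisk_cod C (tmr C (tmr C iA del) iB) \<tau>)
                   (whisk_dom (tens2 C \<tau> (id2 B)) \<gamma>)
       = vcomp2 C ABBB (whisk_cod C (tmr C (tmr C iA iB) del) \<tau>)
                   (whisk_cod C (tmr C (tmr C \<gamma> iB) iB) \<tau>) \<and>
     whisk_cod C (tmr C (tmr C iA eps) iB) \<tau> = id2 AB \<and>
     whisk_cod C (tmr C (tmr C iA iB) eps) \<tau> = id2 AB)"

end

theory Submission
  imports Defs
begin

definition mtyped :: "('o,'m) bmcat \<Rightarrow> ('o,'m) mon \<Rightarrow> bool" where
  "mtyped C X \<longleftrightarrow> src C (mmul X) = tob C (mcar X) (mcar X) \<and> tgt C (mmul X) = mcar X \<and>
     src C (meta X) = unt C \<and> tgt C (meta X) = mcar X"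

lemma mten_simps [simp]:
  "mcar (mten C X Y) = tob C (mcar X) (mcar Y)"
  "mmul (mten C X Y) = cmp C (tmr C (mmul X) (mmul Y))
            (tmr C (tmr C (idm C (mcar X)) (brd C (mcar Y) (mcar X))) (idm C (mcar Y)))"
  "meta (mten C X Y) = tmr C (meta X) (meta Y)"
  by (simp_all add: mten_def mcar_def mmul_def meta_def)

lemma mon_eqI: "mcar X = mcar Y \<Longrightarrow> mmul X = mmul Y \<Longrightarrow> meta X = meta Y \<Longrightarrow> X = Y"
  by (cases X; cases Y) (simp add: mcar_def mmul_def meta_def)

locale bmc = fixes C :: "('o,'m) bmcat" assumes bmc: "is_bmc C"
begin

lemma src_id [simp]: "src C (idm C a) = a" and tgt_id [simp]: "tgt C (idm C a) = a"
  using bmc unfolding is_bmc_def by auto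

lemma src_cmp [simp]: "tgt C g = src C f \<Longrightarrow> src C (cmp C f g) = src C g"
  and tgt_cmp [simp]: "tgt C g = src C f \<Longrightarrow> tgt C (cmp C f g) = tgt C f"
  using bmc unfolding is_bmc_def by auto

lemma cmp_idr: "cmp C f (idm C (src C f)) = f" and cmp_idl: "cmp C (idm C (tgt C f)) f = f"
  using bmc unfolding is_bmc_def by auto

lemma cmp_idr': "src C f = a \<Longrightarrow> cmp C f (idm C a) = f"
  and cmp_idl': "tgt C f = a \<Longrightarrow> cmp C (idm C a) f = f"
  using cmp_idr cmp_idl by auto

lemma cmp_assoc: "tgt C h = src C g \<Longrightarrow> tgt C g = src C f \<Longrightarrow>
        cmp C (cmp C f g) h = cmp C f (cmp C g h)"
  using bmc unfolding is_bmc_def by auto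

lemma src_tmr [simp]: "src C (tmr C f g) = tob C (src C f) (src C g)"
  and tgt_tmr [simp]: "tgt C (tmr C f g) = tob C (tgt C f) (tgt C g)"
  using bmc unfolding is_bmc_def by auto

lemma tmr_idm [simp]: "tmr C (idm C a) (idm C b) = idm C (tob C a b)"
  using bmc unfolding is_bmc_def by auto

lemma ich: "tgt C f = src C f' \<Longrightarrow> tgt C g = src C g' \<Longrightarrow>
        tmr C (cmp C f' f) (cmp C g' g) = cmp C (tmr C f' g') (tmr C f g)"
  using bmc unfolding is_bmc_def by auto

lemma tob_assoc [simp]: "tob C (tob C a b) c = tob C a (tob C b c)"
  using bmc unfolding is_bmc_def by auto

lemma tob_unit [simp]: "tob C (unt C) a = a" "tob C a (unt C) = a"
  using bmc unfolding is_bmc_def by auto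

lemma tmr_assoc [simp]: "tmr C (tmr C f g) h = tmr C f (tmr C g h)"
  using bmc unfolding is_bmc_def by auto

lemma tmr_unit [simp]: "tmr C (idm C (unt C)) f = f" "tmr C f (idm C (unt C)) = f"
  using bmc unfolding is_bmc_def by auto

lemma tmr_idm2 [simp]: "tmr C (idm C a) (tmr C (idm C b) f) = tmr C (idm C (tob C a b)) f"
  by (metis tmr_assoc tmr_idm)

lemma brd_src [simp]: "src C (brd C a b) = tob C a b" and brd_tgt [simp]: "tgt C (brd C a b) = tob C b a"
  using bmc unfolding is_bmc_def by auto

lemma brd_nat: "cmp C (brd C (tgt C f) (tgt C g)) (tmr C f g) = cmp C (tmr C g f) (brd C (src C f) (src C g))"
  using bmc unfolding is_bmc_def by auto

lemma hex1: "brd C a (tob C b d) = cmp C (tmr C (idm C b) (brd C a d)) (tmr C (brd C a b) (idm C d))"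
  and hex2: "brd C (tob C a b) d = cmp C (tmr C (brd C a d) (idm C b)) (tmr C (idm C a) (brd C b d))"
  using bmc unfolding is_bmc_def by auto

lemma monoid_typed: "is_monoid C X \<Longrightarrow> mtyped C X"
  unfolding is_monoid_def mtyped_def Let_def by auto

lemma mten_typed: "mtyped C X \<Longrightarrow> mtyped C Y \<Longrightarrow> mtyped C (mten C X Y)"
  unfolding mtyped_def by auto

lemma id_hom: "mtyped C X \<Longrightarrow> monoid_hom C X X (idm C (mcar X))"
  unfolding mtyped_def monoid_hom_def by (simp add: cmp_idr' cmp_idl')

lemma comp_hom:
  assumes "mtyped C X" "mtyped C Y" "mtyped C Z" "monoid_hom C X Y f" "monoid_hom C Y Z g"
  shows "monoid_hom C X Z (cmp C g f)"
proof -
  have t: "src C (mmul X) = tob C (mcar X) (mcar X)" "tgt C (mmul X) = mcar X"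
     "src C (meta X) = unt C" "tgt C (meta X) = mcar X"
     "src C (mmul Y) = tob C (mcar Y) (mcar Y)" "tgt C (mmul Y) = mcar Y"
     "src C (meta Y) = unt C" "tgt C (meta Y) = mcar Y"
     "src C (mmul Z) = tob C (mcar Z) (mcar Z)" "tgt C (mmul Z) = mcar Z"
    using assms(1-3) unfolding mtyped_def by auto
  have f: "src C f = mcar X" "tgt C f = mcar Y" "cmp C f (mmul X) = cmp C (mmul Y) (tmr C f f)"
     "cmp C f (meta X) = meta Y" using assms(4) unfolding monoid_hom_def by auto
  have g: "src C g = mcar Y" "tgt C g = mcar Z" "cmp C g (mmul Y) = cmp C (mmul Z) (tmr C g g)"
     "cmp C g (meta Y) = meta Z" using assms(5) unfolding monoid_hom_def by auto
  have "cmp C (cmp C g f) (mmul X) = cmp C g (cmp C f (mmul X))"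
    using t f g by (simp add: cmp_assoc)
  also have "\<dots> = cmp C (cmp C g (mmul Y)) (tmr C f f)"
    using t f g by (simp add: cmp_assoc[symmetric])
  also have "\<dots> = cmp C (mmul Z) (cmp C (tmr C g g) (tmr C f f))"
    using t f g by (simp add: cmp_assoc)
  also have "\<dots> = cmp C (mmul Z) (tmr C (cmp C g f) (cmp C g f))"
    using t f g by (simp add: ich)
  finally have m: "cmp C (cmp C g f) (mmul X) = cmp C (mmul Z) (tmr C (cmp C g f) (cmp C g f))" .
  have "cmp C (cmp C g f) (meta X) = meta Z"
    using t f g by (simp add: cmp_assoc)
  then show ?thesis using m f g unfolding monoid_hom_def by simp
qed

lemma tens_hom:
  assumes "mtyped C X" "mtyped C Y" "mtyped C X'" "mtyped C Y'"
    "monoid_hom C X X' f" "monoid_hom C Y Y' g"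
  shows "monoid_hom C (mten C X Y) (mten C X' Y') (tmr C f g)"
proof -
  have t: "src C (mmul X) = tob C (mcar X) (mcar X)" "tgt C (mmul X) = mcar X"
     "src C (meta X) = unt C" "tgt C (meta X) = mcar X"
     "src C (mmul Y) = tob C (mcar Y) (mcar Y)" "tgt C (mmul Y) = mcar Y"
     "src C (meta Y) = unt C" "tgt C (meta Y) = mcar Y"
     "src C (mmul X') = tob C (mcar X') (mcar X')" "tgt C (mmul X') = mcar X'"
     "src C (mmul Y') = tob C (mcar Y') (mcar Y')" "tgt C (mmul Y') = mcar Y'"
    using assms(1-4) unfolding mtyped_def by auto
  have f: "src C f = mcar X" "tgt C f = mcar X'" "cmp C f (mmul X) = cmp C (mmul X') (tmr C f f)"
     "cmp C f (meta X) = meta X'" using assms(5) unfolding monoid_hom_def by auto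
  have g: "src C g = mcar Y" "tgt C g = mcar Y'" "cmp C g (mmul Y) = cmp C (mmul Y') (tmr C g g)"
     "cmp C g (meta Y) = meta Y'" using assms(6) unfolding monoid_hom_def by auto
  define x where "x = mcar X"
  define y where "y = mcar Y"
  define x' where "x' = mcar X'"
  define y' where "y' = mcar Y'"
  define \<sigma> where "\<sigma> = tmr C (tmr C (idm C x) (brd C y x)) (idm C y)"
  define \<sigma>' where "\<sigma>' = tmr C (tmr C (idm C x') (brd C y' x')) (idm C y')"
  note defs = x_def[symmetric] y_def[symmetric] x'_def[symmetric] y'_def[symmetric]
  have nat: "cmp C (brd C y' x') (tmr C g f) = cmp C (tmr C f g) (brd C y x)"
    using brd_nat[of g f] f g defs by simp
  have key: "cmp C (tmr C (tmr C f f) (tmr C g g)) \<sigma> = cmp C \<sigma>' (tmr C (tmr C f g) (tmr C f g))"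
  proof -
    have "cmp C (tmr C (tmr C f f) (tmr C g g)) \<sigma>
        = cmp C (tmr C f (tmr C (tmr C f g) g)) (tmr C (idm C x) (tmr C (brd C y x) (idm C y)))"
      unfolding \<sigma>_def by simp
    also have "\<dots> = tmr C (cmp C f (idm C x)) (tmr C (cmp C (tmr C f g) (brd C y x)) (cmp C g (idm C y)))"
      using f g defs by (simp add: ich)
    also have "\<dots> = tmr C (cmp C (idm C x') f) (tmr C (cmp C (brd C y' x') (tmr C g f)) (cmp C (idm C y') g))"
      using f g defs nat by (simp add: cmp_idr' cmp_idl')
    also have "\<dots> = cmp C (tmr C (idm C x') (tmr C (brd C y' x') (idm C y'))) (tmr C f (tmr C (tmr C g f) g))"
      using f g defs by (simp add: ich)
    also have "\<dots> = cmp C \<sigma>' (tmr C (tmr C f g) (tmr C f g))"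
      unfolding \<sigma>'_def by simp
    finally show ?thesis .
  qed
  have ts: "tgt C \<sigma> = tob C x (tob C x (tob C y y))" "src C \<sigma>' = tob C x' (tob C y' (tob C x' y'))"
    unfolding \<sigma>_def \<sigma>'_def by simp_all
  have "cmp C (tmr C f g) (cmp C (tmr C (mmul X) (mmul Y)) \<sigma>)
      = cmp C (cmp C (tmr C f g) (tmr C (mmul X) (mmul Y))) \<sigma>"
    using t f g ts defs by (simp add: cmp_assoc)
  also have "\<dots> = cmp C (tmr C (cmp C f (mmul X)) (cmp C g (mmul Y))) \<sigma>"
    by (subst ich) (simp_all add: t f g)
  also have "\<dots> = cmp C (tmr C (cmp C (mmul X') (tmr C f f)) (cmp C (mmul Y') (tmr C g g))) \<sigma>"
    using f g by simp
  also have "\<dots> = cmp C (cmp C (tmr C (mmul X') (mmul Y')) (tmr C (tmr C f f) (tmr C g g))) \<sigma>"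
    by (subst ich) (simp_all add: t f g)
  also have "\<dots> = cmp C (tmr C (mmul X') (mmul Y')) (cmp C (tmr C (tmr C f f) (tmr C g g)) \<sigma>)"
    using t f g ts defs by (simp add: cmp_assoc)
  also have "\<dots> = cmp C (tmr C (mmul X') (mmul Y')) (cmp C \<sigma>' (tmr C (tmr C f g) (tmr C f g)))"
    using key by simp
  also have "\<dots> = cmp C (cmp C (tmr C (mmul X') (mmul Y')) \<sigma>') (tmr C (tmr C f g) (tmr C f g))"
    by (rule cmp_assoc[symmetric]) (simp_all add: t f g defs \<sigma>'_def)
  finally have m: "cmp C (tmr C f g) (cmp C (tmr C (mmul X) (mmul Y)) \<sigma>)
      = cmp C (cmp C (tmr C (mmul X') (mmul Y')) \<sigma>') (tmr C (tmr C f g) (tmr C f g))" .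
  have u: "cmp C (tmr C f g) (tmr C (meta X) (meta Y)) = tmr C (meta X') (meta Y')"
    using t f g by (simp add: ich[symmetric])
  show ?thesis using m u f g unfolding monoid_hom_def \<sigma>_def \<sigma>'_def x_def y_def x'_def y'_def by simp
qed

lemma tmr_cmp_idl: "tgt C V = src C U \<Longrightarrow> tmr C (idm C a) (cmp C U V) = cmp C (tmr C (idm C a) U) (tmr C (idm C a) V)"
  using ich[of "idm C a" "idm C a" V U] by (simp add: cmp_idr')

lemma tmr_cmp_idr: "tgt C V = src C U \<Longrightarrow> tmr C (cmp C U V) (idm C a) = cmp C (tmr C U (idm C a)) (tmr C V (idm C a))"
  using ich[of V U "idm C a" "idm C a"] by (simp add: cmp_idr')

lemma swap1: "cmp C (tmr C f (idm C (tgt C g))) (tmr C (idm C (src C f)) g) = tmr C f g"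
  using ich[of "idm C (src C f)" f g "idm C (tgt C g)"] by (simp add: cmp_idr cmp_idl)

lemma swap2: "cmp C (tmr C (idm C (tgt C f)) g) (tmr C f (idm C (src C g))) = tmr C f g"
  using ich[of f "idm C (tgt C f)" "idm C (src C g)" g] by (simp add: cmp_idr cmp_idl)

lemma mten_assoc:
  assumes "mtyped C X" "mtyped C Y" "mtyped C Z"
  shows "mten C (mten C X Y) Z = mten C X (mten C Y Z)"
proof (rule mon_eqI)
  have t: "src C (mmul X) = tob C (mcar X) (mcar X)" "tgt C (mmul X) = mcar X"
     "src C (mmul Y) = tob C (mcar Y) (mcar Y)" "tgt C (mmul Y) = mcar Y"
     "src C (mmul Z) = tob C (mcar Z) (mcar Z)" "tgt C (mmul Z) = mcar Z"
    using assms(1-3) unfolding mtyped_def by auto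
  define x where "x = mcar X"
  define y where "y = mcar Y"
  define z where "z = mcar Z"
  note defs = x_def[symmetric] y_def[symmetric] z_def[symmetric]
  define S where "S = tmr C (tmr C (idm C x) (brd C y x)) (idm C y)"
  define T where "T = tmr C (tmr C (idm C y) (brd C z y)) (idm C z)"
  define P1 where "P1 = tmr C (tmr C (idm C (tob C x y)) (brd C z (tob C x y))) (idm C z)"
  define P2 where "P2 = tmr C (tmr C (idm C x) (brd C (tob C y z) x)) (idm C (tob C y z))"
  define M where "M = tmr C (mmul X) (tmr C (mmul Y) (mmul Z))"
  have tM: "src C M = tob C x (tob C x (tob C y (tob C y (tob C z z))))"
    unfolding M_def using t defs by simp
  have l1: "tmr C (cmp C (tmr C (mmul X) (mmul Y)) S) (mmul Z) = cmp C M (tmr C S (idm C (tob C z z)))"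
  proof -
    have "tmr C (cmp C (tmr C (mmul X) (mmul Y)) S) (mmul Z)
        = tmr C (cmp C (tmr C (mmul X) (mmul Y)) S) (cmp C (mmul Z) (idm C (tob C z z)))"
      using t defs by (simp add: cmp_idr')
    also have "\<dots> = cmp C M (tmr C S (idm C (tob C z z)))"
      unfolding M_def by (subst ich) (simp_all add: t defs S_def)
    finally show ?thesis .
  qed
  have r1: "tmr C (mmul X) (cmp C (tmr C (mmul Y) (mmul Z)) T) = cmp C M (tmr C (idm C (tob C x x)) T)"
  proof -
    have "tmr C (mmul X) (cmp C (tmr C (mmul Y) (mmul Z)) T)
        = tmr C (cmp C (mmul X) (idm C (tob C x x))) (cmp C (tmr C (mmul Y) (mmul Z)) T)"
      using t defs by (simp add: cmp_idr')
    also have "\<dots> = cmp C M (tmr C (idm C (tob C x x)) T)"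
      unfolding M_def by (subst ich) (simp_all add: t defs T_def)
    finally show ?thesis .
  qed
  have sh: "cmp C (tmr C S (idm C (tob C z z))) P1 = cmp C (tmr C (idm C (tob C x x)) T) P2"
  proof -
    define Q1 where "Q1 = tmr C (idm C (tob C x (tob C y x))) (tmr C (brd C z y) (idm C z))"
    define Q2 where "Q2 = tmr C (idm C (tob C x y)) (tmr C (brd C z x) (idm C (tob C y z)))"
    define R1 where "R1 = tmr C (idm C x) (tmr C (brd C y x) (idm C (tob C z (tob C y z))))"
    have p1: "P1 = cmp C Q1 Q2"
      unfolding P1_def Q1_def Q2_def hex1[of z x y] by (simp add: tmr_cmp_idl tmr_cmp_idr)
    have p2: "P2 = cmp C R1 Q2"
      unfolding P2_def R1_def Q2_def hex2[of y z x] by (simp add: tmr_cmp_idl tmr_cmp_idr)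
    have w1: "cmp C (tmr C S (idm C (tob C z z))) Q1 = tmr C (idm C x) (tmr C (brd C y x) (tmr C (brd C z y) (idm C z)))"
      using swap1[of "tmr C (idm C x) (brd C y x)" "tmr C (brd C z y) (idm C z)"]
      unfolding S_def Q1_def by simp
    have w2: "cmp C (tmr C (idm C (tob C x x)) T) R1 = tmr C (idm C x) (tmr C (brd C y x) (tmr C (brd C z y) (idm C z)))"
      using swap2[of "tmr C (idm C x) (brd C y x)" "tmr C (brd C z y) (idm C z)"]
      unfolding T_def R1_def by simp
    have "cmp C (tmr C S (idm C (tob C z z))) P1 = cmp C (cmp C (tmr C S (idm C (tob C z z))) Q1) Q2"
      unfolding p1 by (rule cmp_assoc[symmetric]) (simp_all add: S_def Q1_def Q2_def)
    also have "\<dots> = cmp C (cmp C (tmr C (idm C (tob C x x)) T) R1) Q2" using w1 w2 by simp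
    also have "\<dots> = cmp C (tmr C (idm C (tob C x x)) T) P2"
      unfolding p2 by (rule cmp_assoc) (simp_all add: T_def R1_def Q2_def)
    finally show ?thesis .
  qed
  have tS: "tgt C (tmr C S (idm C (tob C z z))) = src C M" "tgt C (tmr C (idm C (tob C x x)) T) = src C M"
    using tM unfolding S_def T_def by simp_all
  have tP: "tgt C P1 = src C (tmr C S (idm C (tob C z z)))" "tgt C P2 = src C (tmr C (idm C (tob C x x)) T)"
    unfolding S_def T_def P1_def P2_def by simp_all
  have "cmp C (tmr C (cmp C (tmr C (mmul X) (mmul Y)) S) (mmul Z)) P1
      = cmp C (tmr C (mmul X) (cmp C (tmr C (mmul Y) (mmul Z)) T)) P2"
    unfolding l1 r1 using tS tP sh by (simp add: cmp_assoc)
  then show "mmul (mten C (mten C X Y) Z) = mmul (mten C X (mten C Y Z))"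
    unfolding S_def T_def P1_def P2_def x_def y_def z_def by simp
qed simp_all

end

theorem proposition4p5:
  fixes C :: "('o,'m) bmcat" and A B :: "('o,'m) mon" and del eps \<gamma> \<tau> :: 'm
  assumes "is_bmc C"
    and "is_monoid C A"
    and "is_bimonoid C B del eps"
    and "src C \<gamma> = mcar A" and "tgt C \<gamma> = tob C (mcar A) (mcar B)"
    and "src C \<tau> = unt C" and "tgt C \<tau> = tob C (tob C (mcar A) (mcar B)) (mcar B)"
  shows "twisted_right_coaction C A B del eps \<gamma> \<tau> \<longleftrightarrow>
         normal_lax_right_coaction_MonV C A B del eps \<gamma> \<tau>"
proof -
  interpret bmc C by unfold_locales (rule assms(1))
  have tA: "mtyped C A" by (rule monoid_typed[OF assms(2)])
  have tB: "mtyped C B" using assms(3) monoid_typed unfolding is_bimonoid_def by blast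
  have tAB: "mtyped C (mten C A B)" using tA tB mten_typed by blast
  have tABB: "mtyped C (mten C (mten C A B) B)" using tAB tB mten_typed by blast
  have tBB: "mtyped C (mten C B B)" using tB mten_typed by blast
  have dh: "monoid_hom C B (mten C B B) del" using assms(3) unfolding is_bimonoid_def by blast
  have homs: "monoid_hom C A (mten C (mten C A B) B) (cmp C (tmr C \<gamma> (idm C (mcar B))) \<gamma>)
     \<and> monoid_hom C A (mten C (mten C A B) B) (cmp C (tmr C (idm C (mcar A)) del) \<gamma>)"
    if gh: "monoid_hom C A (mten C A B) \<gamma>"
  proof
    show "monoid_hom C A (mten C (mten C A B) B) (cmp C (tmr C \<gamma> (idm C (mcar B))) \<gamma>)"
      by (rule comp_hom[OF tA tAB tABB gh tens_hom[OF tA tB tAB tB gh id_hom[OF tB]]])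
    have "monoid_hom C (mten C A B) (mten C A (mten C B B)) (tmr C (idm C (mcar A)) del)"
      by (rule tens_hom[OF tA tB tA tBB id_hom[OF tA] dh])
    then have "monoid_hom C (mten C A B) (mten C (mten C A B) B) (tmr C (idm C (mcar A)) del)"
      using mten_assoc[OF tA tB tB] by simp
    then show "monoid_hom C A (mten C (mten C A B) B) (cmp C (tmr C (idm C (mcar A)) del) \<gamma>)"
      by (rule comp_hom[OF tA tAB tABB gh])
  qed
  show ?thesis
    unfolding twisted_right_coaction_def normal_lax_right_coaction_MonV_def Let_def
      mon1cell_def mon2cell_def vcomp2_def whisk_cod_def whisk_dom_def tens2_def id2_def
    using homs assms(6,7) by (auto simp: mtyped_def)
qed

end
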